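(* For any $m,n\in\mathbb N$ there exists a constant $c>0$ such that $|\mathbb P^T_m(x)-\mathbb P^T_n(x)|\le c$ for all real $x\ge1$. Consequently $\mathbb P^T_m(x)\sim\mathbb P^T_n(x)$ as $x\to+\infty$ for arbitrary $m,n\in\mathbb N$.
   Context: Let $p_n$ denote the $n$-th prime number. Define $p^{(0)}_n=n$ and recursively $p^{(k+1)}_n=p_{p^{(k)}_n}$ for $k\in\mathbb N_0$. Let $\mathbb P^T_n=\{p^{(k)}_n:k\in\mathbb N\}$ and, for $A\subset\mathbb N$ and $x\ge1$, $A(x)=\#\{a\le x: a\in A\}$. $f\sim g$ means $f/g\to1$. *)

theory Defs
  imports Complex_Main "HOL-Computational_Algebra.Primes" "HOL-Library.Landau_Symbols"
    "HOL-Library.Infinite_Set"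
begin

text \<open>The n-th prime p_n, 1-indexed (p_1 = 2, p_2 = 3, ...).
  The value at 0 is irrelevant (never used).\<close>
definition nth_prime :: "nat \<Rightarrow> nat" where
  "nth_prime n = enumerate {p. prime p} (n - 1)"

definition iter_prime :: "nat \<Rightarrow> nat \<Rightarrow> nat" where
  "iter_prime k n = (nth_prime ^^ k) n"

definition PT :: "nat \<Rightarrow> nat set" where
  "PT n = {iter_prime k n | k. k \<ge> 1}"

definition count_le :: "nat set \<Rightarrow> real \<Rightarrow> nat" where
  "count_le A x = card {a \<in> A. real a \<le> x}"

end

theory Submission
  imports Defs
begin

lemma infinite_primes_set: "infinite {p::nat. prime p}"
  using primes_infinite by simp

lemma np_mono: "mono nth_prime"
proof (rule monoI)
  fix a b :: nat assume "a \<le> b"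
  then show "nth_prime a \<le> nth_prime b"
    unfolding nth_prime_def using enumerate_mono_le_iff[OF infinite_primes_set] by simp
qed

lemma enum_ge: "enumerate {p::nat. prime p} i \<ge> i + 2"
proof (induction i)
  case 0
  have "prime (enumerate {p::nat. prime p} 0)"
    using enumerate_in_set[OF infinite_primes_set] by blast
  then have "2 \<le> enumerate {p::nat. prime p} 0" by (rule prime_ge_2_nat)
  then show ?case by simp
next
  case (Suc i)
  have "enumerate {p::nat. prime p} i < enumerate {p::nat. prime p} (Suc i)"
    using strict_monoD[OF strict_mono_enumerate[OF infinite_primes_set]] by simp
  then show ?case using Suc by simp
qed

lemma np_gt: "nth_prime k > k"
  unfolding nth_prime_def using enum_ge[of "k - 1"] by simp

definition g :: "nat \<Rightarrow> nat \<Rightarrow> nat" where "g n k = (nth_prime ^^ k) n"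

lemma g_Suc: "g n (Suc k) = nth_prime (g n k)"
  unfolding g_def by simp

lemma g_smono: "strict_mono (g n)"
  unfolding strict_mono_Suc_iff by (simp add: g_Suc np_gt)

lemma g_ge: "g n k \<ge> k + n"
  by (induction k) (auto simp: g_def np_gt Suc_le_eq intro: le_less_trans)

lemma iter_mono: "a \<le> b \<Longrightarrow> (nth_prime ^^ k) a \<le> (nth_prime ^^ k) b"
  by (induction k) (auto intro: monoD[OF np_mono])

lemma g_mono_start: "a \<le> b \<Longrightarrow> g a k \<le> g b k"
  unfolding g_def by (rule iter_mono)

lemma g_add: "g n (k + j) = (nth_prime ^^ k) (g n j)"
  unfolding g_def by (simp add: funpow_add)

definition K :: "nat \<Rightarrow> real \<Rightarrow> nat set" where
  "K n x = {k. 1 \<le> k \<and> real (g n k) \<le> x}"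

lemma K_finite: "finite (K n x)"
proof -
  have "K n x \<subseteq> {..nat \<lceil>x\<rceil>}"
  proof
    fix k assume "k \<in> K n x"
    hence "real (g n k) \<le> x" by (simp add: K_def)
    moreover have "real k \<le> real (g n k)" using g_ge[of k n] by simp
    ultimately show "k \<in> {..nat \<lceil>x\<rceil>}" by (simp add: le_nat_iff le_ceiling_iff)
  qed
  then show ?thesis using finite_subset by blast
qed

lemma count_K: "count_le (PT n) x = card (K n x)"
proof -
  have "{a \<in> PT n. real a \<le> x} = g n ` K n x"
    unfolding PT_def K_def iter_prime_def g_def by auto
  moreover have "inj_on (g n) (K n x)"
    using strict_mono_imp_inj_on[OF g_smono] inj_on_subset by blast
  ultimately show ?thesis unfolding count_le_def by (simp add: card_image)
qed

lemma K_sub: assumes "m \<le> n" shows "K n x \<subseteq> K m x"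
proof
  fix k assume k: "k \<in> K n x"
  have "real (g m k) \<le> real (g n k)" using g_mono_start[OF assms] by simp
  then show "k \<in> K m x" using k by (simp add: K_def)
qed

lemma K_bound:
  assumes "n \<le> g m j"
  shows "card (K m x) \<le> card (K n x) + j"
proof -
  have "K m x \<subseteq> {1..j} \<union> (\<lambda>k. k + j) ` K n x"
  proof
    fix k assume k: "k \<in> K m x"
    show "k \<in> {1..j} \<union> (\<lambda>k. k + j) ` K n x"
    proof (cases "k \<le> j")
      case True then show ?thesis using k by (simp add: K_def)
    next
      case False
      then obtain i where i: "k = i + j" "i \<ge> 1" by (rule_tac that[of "k - j"]) auto
      have "g n i \<le> g m k"
        unfolding i(1) g_add using assms g_def iter_mono by metis
      then have "i \<in> K n x" using k i by (auto simp: K_def)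
      then show ?thesis using i by auto
    qed
  qed
  then have "card (K m x) \<le> card ({1..j} \<union> (\<lambda>k. k + j) ` K n x)"
    by (intro card_mono) (auto intro: K_finite)
  also have "\<dots> \<le> card {1..j} + card ((\<lambda>k. k + j) ` K n x)" by (rule card_Un_le)
  also have "\<dots> \<le> j + card (K n x)" using card_image_le[OF K_finite] by simp
  finally show ?thesis by simp
qed

lemma K_large:
  assumes "real (g n N) \<le> x"
  shows "card (K n x) \<ge> N"
proof -
  have "{1..N} \<subseteq> K n x"
  proof
    fix k assume k: "k \<in> {1..N}"
    have "real (g n k) \<le> real (g n N)" using k strict_mono_less_eq[OF g_smono] by simp
    then show "k \<in> K n x" using k assms by (simp add: K_def)
  qed
  then have "card {1..N} \<le> card (K n x)" using K_finite card_mono by blast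
  then show ?thesis by simp
qed

lemma K_tends: "filterlim (\<lambda>x. real (card (K n x))) at_top at_top"
unfolding filterlim_at_top
proof (intro allI)
  fix Z :: real
  show "\<forall>\<^sub>F x in at_top. Z \<le> real (card (K n x))"
  proof (rule eventually_at_top_linorderI[of "real (g n (nat \<lceil>Z\<rceil>))"])
    fix x assume "real (g n (nat \<lceil>Z\<rceil>)) \<le> x"
    then have "card (K n x) \<ge> nat \<lceil>Z\<rceil>" by (rule K_large)
    then show "Z \<le> real (card (K n x))" by linarith
  qed
qed

lemma main_ordered:
  assumes "m \<le> n"
  shows "\<exists>j. \<forall>x. card (K n x) \<le> card (K m x) \<and> card (K m x) \<le> card (K n x) + j"
proof -
  have "n \<le> g m n" using g_ge[of n m] by simp
  then show ?thesis using K_bound K_sub[OF assms] K_finite card_mono by metis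
qed

lemma main_sym: "\<exists>j. \<forall>x. \<bar>real (card (K m x)) - real (card (K n x))\<bar> \<le> real j"
proof (cases "m \<le> n")
  case True
  then obtain j where "\<forall>x. card (K n x) \<le> card (K m x) \<and> card (K m x) \<le> card (K n x) + j"
    using main_ordered by blast
  then show ?thesis by (intro exI[of _ j] allI) (smt (verit) of_nat_add of_nat_mono)
next
  case False
  then obtain j where "\<forall>x. card (K m x) \<le> card (K n x) \<and> card (K n x) \<le> card (K m x) + j"
    using main_ordered[of n m] by auto
  then show ?thesis by (intro exI[of _ j] allI) (smt (verit) of_nat_add of_nat_mono)
qed

theorem theorem6:
  fixes m n :: nat
  assumes "m \<ge> 1" and "n \<ge> 1"
  shows "(\<exists>c>0. \<forall>x::real. x \<ge> 1 \<longrightarrow>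
            \<bar>real (count_le (PT m) x) - real (count_le (PT n) x)\<bar> \<le> c)
       \<and> (\<lambda>x. real (count_le (PT m) x)) \<sim>[at_top] (\<lambda>x. real (count_le (PT n) x))"
proof -
  obtain j where j: "\<forall>x. \<bar>real (card (K m x)) - real (card (K n x))\<bar> \<le> real j"
    using main_sym by blast
  have part1: "\<exists>c>0. \<forall>x::real. x \<ge> 1 \<longrightarrow>
            \<bar>real (count_le (PT m) x) - real (count_le (PT n) x)\<bar> \<le> c"
    using j by (intro exI[of _ "real j + 1"]) (auto simp: count_K intro: order_trans)
  have lim0: "((\<lambda>x. 1 / real (card (K n x))) \<longlongrightarrow> 0) at_top"
    by (rule tendsto_divide_0[OF tendsto_const filterlim_at_top_imp_at_infinity[OF K_tends]])
  have ev: "\<forall>\<^sub>F x in at_top. card (K n x) > 0"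
    using filterlim_at_top_dense[THEN iffD1, OF K_tends, rule_format, of 0] by simp
  have "((\<lambda>x. real (card (K m x)) / real (card (K n x)) - 1) \<longlongrightarrow> 0) at_top"
  proof (rule tendsto_0_le[OF lim0, where K="real j"])
    show "\<forall>\<^sub>F x in at_top. norm (real (card (K m x)) / real (card (K n x)) - 1)
              \<le> norm (1 / real (card (K n x))) * real j"
      using ev
    proof (rule eventually_mono)
      fix x assume pos: "card (K n x) > 0"
      have "real (card (K m x)) / real (card (K n x)) - 1
            = (real (card (K m x)) - real (card (K n x))) / real (card (K n x))"
        using pos by (simp add: field_simps)
      then show "norm (real (card (K m x)) / real (card (K n x)) - 1)
              \<le> norm (1 / real (card (K n x))) * real j"
        using j pos by (simp add: abs_divide divide_right_mono)
    qed
  qed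
  then have "((\<lambda>x. real (card (K m x)) / real (card (K n x))) \<longlongrightarrow> 1) at_top"
    by (simp add: LIM_zero_iff)
  then have "(\<lambda>x. real (count_le (PT m) x)) \<sim>[at_top] (\<lambda>x. real (count_le (PT n) x))"
    by (intro asymp_equivI') (simp add: count_K)
  with part1 show ?thesis by blast
qed

end
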